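(* Let $f(z)=\sum_{n=0}^{\infty}a_{n}z^{n}$ be an entire function with $a_{0}\cdot a_{n}>0$ for all $n\ge0$, of order $\rho(f)=\limsup_{n\to\infty}\frac{n\log n}{-\log|a_{n}|}<1$, having a nonzero root, and write $\frac{f(z)}{f(0)}=\prod_{n=1}^{\infty}\left(1+\frac{z}{\lambda_{n}}\right)$ with $\sum_{n}1/|\lambda_n|<\infty$, where $\{-\lambda_n\}$ are the zeros of $f$ with multiplicity. Assume there exists $\beta_{0}\in(0,1)$ with $\Re(\lambda_{n})\ge\beta_{0}|\lambda_{n}|>0$ for all $n\in\mathbb{N}$, and let $\Theta(t)=\sum_{n=1}^{\infty}e^{-\lambda_{n}t}$ for $t>0$. Then the sequence $\{\lambda_{n}\}_{n=1}^{\infty}$ is positive (all $\lambda_n>0$) if and only if $\Theta$ is completely monotonic on $(0,\infty)$.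
   Context: A function $g\in C^\infty(0,\infty)$ is completely monotonic on $(0,\infty)$ if $(-1)^{k}g^{(k)}(x)\ge 0$ for all $x>0$ and all $k\in\mathbb{N}_0$. *)

theory Defs
  imports "HOL-Analysis.Analysis"
begin

definition completely_monotonic :: "(real \<Rightarrow> real) \<Rightarrow> bool" where
  "completely_monotonic g \<longleftrightarrow>
     (\<forall>k::nat. \<forall>x>0. ((deriv ^^ k) g) differentiable (at x)) \<and>
     (\<forall>k::nat. \<forall>x>0. (-1) ^ k * (deriv ^^ k) g x \<ge> 0)"

end

theory Submission imports Defs begin
lemma exp_pow_bound: fixes y :: real assumes "0 \<le> y" shows "y ^ n / fact n \<le> exp y"
proof -
  have s: "summable (\<lambda>n. y ^ n / fact n)" using summable_exp[of y] by (simp add: divide_inverse mult.commute)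
  have "y ^ n / fact n = (\<Sum>i\<in>{n}. y ^ i / fact i)" by simp
  also have "\<dots> \<le> (\<Sum>i. y ^ i / fact i)"
    by (rule sum_le_suminf[OF s]) (use assms in auto)
  also have "\<dots> = exp y" by (simp add: exp_def divide_inverse mult.commute scaleR_conv_of_real)
  finally show ?thesis .
qed

lemma pow_exp_bound: fixes x c :: real assumes "0 < x" "0 < c"
  shows "x ^ k * exp (- c * x) \<le> (fact (Suc k) / c ^ Suc k) * (1 / x)"
proof -
  have "(c*x) ^ Suc k / fact (Suc k) \<le> exp (c * x)" using exp_pow_bound[of "c*x" "Suc k"] assms by simp
  hence "(c*x) ^ Suc k \<le> exp (c*x) * fact (Suc k)"
    by (subst (asm) divide_le_eq) auto
  hence "c ^ Suc k * x ^ Suc k \<le> fact (Suc k) * exp (c*x)"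
    by (simp only: power_mult_distrib mult.commute)
  hence "c ^ Suc k * x ^ Suc k * exp (- c * x) \<le> fact (Suc k) * exp (c*x) * exp (- c * x)"
    by (intro mult_right_mono) auto
  also have "\<dots> = fact (Suc k)" by (simp add: exp_minus)
  finally have "c ^ Suc k * (x ^ Suc k * exp (- c * x)) \<le> fact (Suc k)" by (simp add: mult.assoc)
  hence "x ^ Suc k * exp (- c * x) \<le> fact (Suc k) / c ^ Suc k"
    using assms by (simp add: pos_le_divide_eq mult.commute)
  thus ?thesis using assms by (simp add: field_simps)
qed

lemma summable_pow_exp:
  fixes lam :: "nat \<Rightarrow> complex"
  assumes sec: "\<And>n. Re (lam n) \<ge> \<beta> * cmod (lam n) \<and> \<beta> * cmod (lam n) > 0"
    and summ: "summable (\<lambda>n. 1 / cmod (lam n))" and c: "0 < c"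
  shows "summable (\<lambda>n. cmod (lam n) ^ k * exp (- c * cmod (lam n)))"
proof (rule summable_comparison_test[OF _ summable_mult[OF summ, of "fact (Suc k) / c ^ Suc k"]])
  have pos: "cmod (lam n) > 0" for n using sec[of n]
    by (metis mult_eq_0_iff norm_ge_zero order_less_irrefl order_le_less)
  show "\<exists>N. \<forall>n\<ge>N. norm (cmod (lam n) ^ k * exp (- c * cmod (lam n))) \<le> fact (Suc k) / c ^ Suc k * (1 / cmod (lam n))"
    using pow_exp_bound[OF pos c] by auto
qed

lemma term_bound:
  fixes lam :: "nat \<Rightarrow> complex"
  assumes sec: "\<And>n. Re (lam n) \<ge> \<beta> * cmod (lam n) \<and> \<beta> * cmod (lam n) > 0"
    and x: "0 < x" and z: "z \<in> ball (complex_of_real x) (\<beta> * x / 2)"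
  shows "cmod ((- lam n) ^ k * exp (- lam n * z)) \<le> cmod (lam n) ^ k * exp (- (\<beta> * x / 2) * cmod (lam n))"
proof -
  have e1: "Re (lam n * z) = Re (lam n) * x + Re (lam n * (z - of_real x))" by (simp add: algebra_simps)
  have e2: "\<bar>Re (lam n * (z - of_real x))\<bar> \<le> (\<beta> * x / 2) * cmod (lam n)"
  proof -
    have "\<bar>Re (lam n * (z - of_real x))\<bar> \<le> cmod (lam n * (z - of_real x))" by (rule abs_Re_le_cmod)
    also have "\<dots> = cmod (lam n) * cmod (z - of_real x)" by (simp add: norm_mult)
    also have "\<dots> \<le> cmod (lam n) * (\<beta> * x / 2)"
      using z by (intro mult_left_mono) (auto simp: dist_norm norm_minus_commute)
    finally show ?thesis by (simp add: mult.commute)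
  qed
  have e3: "Re (lam n) * x \<ge> 2 * ((\<beta> * x / 2) * cmod (lam n))"
  proof -
    have "Re (lam n) * x \<ge> \<beta> * cmod (lam n) * x" using sec[of n] x by (intro mult_right_mono) auto
    thus ?thesis by (simp add: algebra_simps)
  qed
  have "Re (lam n * z) \<ge> (\<beta> * x / 2) * cmod (lam n)" using e1 e2 e3 by linarith
  hence "exp (Re (- lam n * z)) \<le> exp (- (\<beta> * x / 2) * cmod (lam n))" by simp
  hence "cmod (lam n) ^ k * exp (Re (- lam n * z)) \<le> cmod (lam n) ^ k * exp (- (\<beta> * x / 2) * cmod (lam n))"
    by (intro mult_left_mono) auto
  thus ?thesis by (simp only: norm_mult norm_power norm_exp_eq_Re norm_minus_cancel)
qed

definition Fk :: "(nat \<Rightarrow> complex) \<Rightarrow> nat \<Rightarrow> complex \<Rightarrow> complex" where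
  "Fk lam k z = (\<Sum>n. (- lam n) ^ k * exp (- lam n * z))"

lemma beta_pos:
  fixes lam :: "nat \<Rightarrow> complex"
  assumes sec: "\<And>n. Re (lam n) \<ge> \<beta> * cmod (lam n) \<and> \<beta> * cmod (lam n) > 0"
  shows "\<beta> > 0"
  using sec[of 0] by (auto simp: zero_less_mult_iff)

lemma Fk_deriv:
  fixes lam :: "nat \<Rightarrow> complex"
  assumes sec: "\<And>n. Re (lam n) \<ge> \<beta> * cmod (lam n) \<and> \<beta> * cmod (lam n) > 0"
    and summ: "summable (\<lambda>n. 1 / cmod (lam n))" and x: "0 < x"
  shows "summable (\<lambda>n. (- lam n) ^ k * exp (- lam n * of_real x))"
    "(Fk lam k has_field_derivative Fk lam (Suc k) (of_real x)) (at (of_real x))"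
proof -
  have b: "\<beta> > 0" by (rule beta_pos[OF sec])
  define S where "S = ball (complex_of_real x) (\<beta> * x / 2)"
  have xS: "complex_of_real x \<in> S" unfolding S_def using b x by simp
  have cS: "convex S" unfolding S_def by simp
  have iS: "complex_of_real x \<in> interior S" using xS unfolding S_def by simp
  have c: "\<beta> * x / 2 > 0" using b x by simp
  have der: "((\<lambda>z. (- lam n) ^ k * exp (- lam n * z)) has_field_derivative (- lam n) ^ Suc k * exp (- lam n * z)) (at z within S)" for n z
    by (auto intro!: derivative_eq_intros simp: algebra_simps)
  have M: "summable (\<lambda>n. cmod (lam n) ^ j * exp (- (\<beta> * x / 2) * cmod (lam n)))" for j
    by (rule summable_pow_exp[OF sec summ c])
  have uc: "uniformly_convergent_on S (\<lambda>n z. \<Sum>i<n. (- lam i) ^ Suc k * exp (- lam i * z))"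
    unfolding uniformly_convergent_on_def
  proof (rule exI, rule Weierstrass_m_test[OF _ M[of "Suc k"]])
    fix n z assume "z \<in> S"
    hence "z \<in> ball (complex_of_real x) (\<beta> * x / 2)" by (simp add: S_def)
    thus "norm ((- lam n) ^ Suc k * exp (- lam n * z)) \<le> cmod (lam n) ^ Suc k * exp (- (\<beta> * x / 2) * cmod (lam n))"
      by (rule term_bound[OF sec x])
  qed
  have s0: "summable (\<lambda>n. (- lam n) ^ k * exp (- lam n * complex_of_real x))"
  proof (rule summable_norm_cancel, rule summable_comparison_test[OF _ M[of k]], intro exI allI impI)
    fix n :: nat
    have "cmod ((- lam n) ^ k * exp (- lam n * complex_of_real x)) \<le> cmod (lam n) ^ k * exp (- (\<beta> * x / 2) * cmod (lam n))"
      by (rule term_bound[OF sec x xS[unfolded S_def]])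
    thus "norm (norm ((- lam n) ^ k * exp (- lam n * complex_of_real x))) \<le> cmod (lam n) ^ k * exp (- (\<beta> * x / 2) * cmod (lam n))"
      by simp
  qed
  show "summable (\<lambda>n. (- lam n) ^ k * exp (- lam n * of_real x))" by (rule s0)
  show "(Fk lam k has_field_derivative Fk lam (Suc k) (of_real x)) (at (of_real x))"
    unfolding Fk_def[abs_def]
    by (rule has_field_derivative_series'(2)[OF cS der uc xS s0 iS])
qed

lemma ReFk_deriv:
  fixes lam :: "nat \<Rightarrow> complex"
  assumes sec: "\<And>n. Re (lam n) \<ge> \<beta> * cmod (lam n) \<and> \<beta> * cmod (lam n) > 0"
    and summ: "summable (\<lambda>n. 1 / cmod (lam n))" and x: "0 < x"
  shows "((\<lambda>s. Re (Fk lam k (of_real s))) has_real_derivative Re (Fk lam (Suc k) (of_real x))) (at x)"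
proof -
  have "((\<lambda>s. Fk lam k (of_real s)) has_vector_derivative Fk lam (Suc k) (of_real x)) (at x)"
    by (rule has_vector_derivative_real_field[OF Fk_deriv(2)[OF sec summ x]])
  from bounded_linear.has_vector_derivative[OF bounded_linear_Re this]
  show ?thesis by (simp add: has_real_derivative_iff_has_vector_derivative)
qed

lemma deriv_iter:
  fixes lam :: "nat \<Rightarrow> complex"
  assumes sec: "\<And>n. Re (lam n) \<ge> \<beta> * cmod (lam n) \<and> \<beta> * cmod (lam n) > 0"
    and summ: "summable (\<lambda>n. 1 / cmod (lam n))"
  shows "\<forall>t>0. (deriv ^^ k) (\<lambda>t. Re (\<Sum>n. exp (- lam n * complex_of_real t))) t = Re (Fk lam k (of_real t))"
proof (induction k)
  case 0
  then show ?case by (simp add: Fk_def)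
next
  case (Suc k)
  show ?case
  proof (intro allI impI)
    fix t :: real assume t: "0 < t"
    have "((deriv ^^ k) (\<lambda>t. Re (\<Sum>n. exp (- lam n * complex_of_real t))) has_real_derivative Re (Fk lam (Suc k) (of_real t))) (at t)"
      by (rule has_field_derivative_transform_within_open[OF ReFk_deriv[OF sec summ t], of "{0<..}"])
         (use t Suc.IH in auto)
    thus "(deriv ^^ Suc k) (\<lambda>t. Re (\<Sum>n. exp (- lam n * complex_of_real t))) t = Re (Fk lam (Suc k) (of_real t))"
      by (simp add: DERIV_imp_deriv)
  qed
qed

lemma deriv_iter_diff:
  fixes lam :: "nat \<Rightarrow> complex"
  assumes sec: "\<And>n. Re (lam n) \<ge> \<beta> * cmod (lam n) \<and> \<beta> * cmod (lam n) > 0"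
    and summ: "summable (\<lambda>n. 1 / cmod (lam n))" and t: "0 < t"
  shows "((deriv ^^ k) (\<lambda>t. Re (\<Sum>n. exp (- lam n * complex_of_real t)))) differentiable (at t)"
proof -
  have "((deriv ^^ k) (\<lambda>t. Re (\<Sum>n. exp (- lam n * complex_of_real t))) has_real_derivative Re (Fk lam (Suc k) (of_real t))) (at t)"
    by (rule has_field_derivative_transform_within_open[OF ReFk_deriv[OF sec summ t], of "{0<..}"])
       (use t deriv_iter[OF sec summ, of k] in auto)
  thus ?thesis using real_differentiable_def by blast
qed
lemma phase_choice:
  fixes b0 \<alpha> \<tau>1 :: real assumes b0: "b0 > 0"
  shows "\<exists>\<tau>. \<tau>1 \<le> \<tau> \<and> \<tau> \<le> \<tau>1 + 2*pi/b0 \<and> cos (\<alpha> - b0*\<tau>) = -1"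
proof -
  define j where "j = floor ((\<alpha> - pi - b0*\<tau>1)/(2*pi))"
  define \<tau> where "\<tau> = (\<alpha> - pi - 2*pi* of_int j)/b0"
  have j1: "of_int j \<le> (\<alpha> - pi - b0*\<tau>1)/(2*pi)" and j2: "(\<alpha> - pi - b0*\<tau>1)/(2*pi) < of_int j + 1"
    unfolding j_def by linarith+
  have pp: "pi > 0" by (rule pi_gt_zero)
  from j1 have "2*pi* of_int j \<le> \<alpha> - pi - b0*\<tau>1" using pp by (simp add: field_simps)
  hence "b0*\<tau>1 \<le> \<alpha> - pi - 2*pi* of_int j" by linarith
  hence t1: "\<tau>1 \<le> \<tau>" unfolding \<tau>_def using b0 by (simp add: field_simps)
  from j2 have "\<alpha> - pi - b0*\<tau>1 < 2*pi* of_int j + 2*pi" using pp by (simp add: field_simps)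
  hence "\<alpha> - pi - 2*pi* of_int j \<le> b0*\<tau>1 + 2*pi" by linarith
  hence "\<tau> \<le> (b0*\<tau>1 + 2*pi)/b0" unfolding \<tau>_def using b0 by (intro divide_right_mono) auto
  also have "\<dots> = \<tau>1 + 2*pi/b0" using b0 by (simp add: field_simps)
  finally have t2: "\<tau> \<le> \<tau>1 + 2*pi/b0" .
  have "\<alpha> - b0*\<tau> = pi + of_int j * (2 * pi)" unfolding \<tau>_def using b0 by (simp add: field_simps)
  hence "cos (\<alpha> - b0*\<tau>) = cos pi" using cos.plus_of_int[of pi j] by simp
  thus ?thesis using t1 t2 by auto
qed

lemma xexp_bound:
  fixes x c :: real assumes "0 < x" "0 < c"
  shows "x * exp (- x / c) \<le> c * exp (-1)"
proof -
  define y where "y = x / c"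
  have "1 + (y - 1) \<le> exp (y - 1)" by (rule exp_ge_add_one_self)
  hence "y \<le> exp y * exp (-1)" by (simp add: exp_diff exp_minus field_simps)
  hence "y * exp (-y) \<le> exp (-1)" by (simp add: exp_minus field_simps)
  hence "c * (y * exp (-y)) \<le> c * exp (-1)" using assms by (intro mult_left_mono) auto
  thus ?thesis using assms by (simp add: y_def)
qed

lemma key:
  fixes lam :: "nat \<Rightarrow> complex"
  assumes sec: "\<And>n. Re (lam n) \<ge> \<beta> * cmod (lam n) \<and> \<beta> * cmod (lam n) > 0"
    and summ: "summable (\<lambda>n. 1 / cmod (lam n))"
    and pos: "\<And>k t. t > 0 \<Longrightarrow> Re (\<Sum>n. lam n ^ k * exp (- lam n * of_real t)) \<ge> 0"
  shows "Im (lam m) = 0"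
proof (rule ccontr)
  assume im: "Im (lam m) \<noteq> 0"
  have b: "\<beta> > 0" by (rule beta_pos[OF sec])
  define r where "r n = Re (lam n)" for n
  define a where "a n = cmod (lam n)" for n
  have apos: "a n > 0" for n using sec[of n] b unfolding a_def by (auto simp: zero_less_mult_iff)
  have rge: "r n \<ge> \<beta> * a n" for n using sec[of n] unfolding a_def r_def by auto
  have rpos: "r n > 0" for n using rge[of n] apos[of n] b by (smt (verit) mult_pos_pos)
  have cm2: "a n ^ 2 = r n ^ 2 + Im (lam n) ^ 2" for n unfolding a_def r_def by (rule cmod_power2)
  define s where "s = 1 / r m"
  have spos: "s > 0" using rpos[of m] by (simp add: s_def)
  define q where "q n = a n * exp (- r n * s)" for n
  have qpos: "q n > 0" for n using apos[of n] by (simp add: q_def)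
  have qsum: "summable q"
  proof (rule summable_comparison_test[OF _ summable_pow_exp[OF sec summ, of "\<beta> * s" 1]])
    show "0 < \<beta> * s" using b spos by simp
    show "\<exists>N. \<forall>n\<ge>N. norm (q n) \<le> cmod (lam n) ^ 1 * exp (- (\<beta> * s) * cmod (lam n))"
    proof (intro exI allI impI)
      fix n :: nat
      have "- r n * s \<le> - (\<beta> * s) * a n" using rge[of n] spos by (simp add: mult_right_mono)
      hence "q n \<le> a n * exp (- (\<beta> * s) * a n)" unfolding q_def using apos[of n] by (intro mult_left_mono) auto
      thus "norm (q n) \<le> cmod (lam n) ^ 1 * exp (- (\<beta> * s) * cmod (lam n))" using qpos[of n] by (simp add: a_def)
    qed
  qed
  have q0: "q \<longlonglongrightarrow> 0" by (rule summable_LIMSEQ_zero[OF qsum])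
  have fin_ge: "finite {n. q n \<ge> c}" if c: "c > 0" for c
  proof -
    from q0 c have "eventually (\<lambda>n. q n < c) sequentially"
      by (metis order_tendstoD(2))
    then obtain N where N: "\<And>n. n \<ge> N \<Longrightarrow> q n < c" by (auto simp: eventually_sequentially)
    have "{n. q n \<ge> c} \<subseteq> {..<N}" using N by (auto simp: not_less[symmetric])
    thus ?thesis using finite_subset by blast
  qed
  have rm_lt: "r m < a m"
  proof -
    have "r m ^ 2 < a m ^ 2" using cm2[of m] im by simp
    thus ?thesis using apos[of m] by (simp add: power_less_imp_less_base)
  qed
  have qm: "q m = a m * exp (-1)" unfolding q_def s_def using rpos[of m] by simp
  have real_small: "q n < q m" if "Im (lam n) = 0" for n
  proof -
    have "a n = r n" using cmod_eq_Re[OF that] rpos[of n] unfolding a_def r_def by simp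
    hence "q n = r n * exp (- r n / r m)" unfolding q_def s_def by simp
    also have "\<dots> \<le> r m * exp (-1)" by (rule xexp_bound[OF rpos rpos])
    also have "\<dots> < a m * exp (-1)" using rm_lt by simp
    finally show ?thesis using qm by simp
  qed
  define A where "A = {n. q n \<ge> q m}"
  have finA: "finite A" unfolding A_def by (rule fin_ge[OF qpos])
  have mA: "m \<in> A" unfolding A_def by simp
  define Q where "Q = Max (q ` A)"
  have Qge: "q n \<le> Q" for n
  proof (cases "n \<in> A")
    case True thus ?thesis unfolding Q_def using finA by simp
  next
    case False
    hence "q n < q m" unfolding A_def by simp
    also have "q m \<le> Q" unfolding Q_def using finA mA by simp
    finally show ?thesis by simp
  qed
  have QqA: "Q \<in> q ` A" unfolding Q_def using finA mA by (intro Max_in) auto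
  have qmQ: "q m \<le> Q" by (rule Qge)
  have Qpos: "Q > 0" using qpos[of m] qmQ by simp
  define T where "T = {n. q n = Q}"
  have finT: "finite T" using fin_ge[OF Qpos] unfolding T_def by (rule finite_subset[rotated]) auto
  have Tne: "T \<noteq> {}" using QqA unfolding T_def by auto
  have Tnr: "Im (lam n) \<noteq> 0" if "n \<in> T" for n
    using real_small[of n] that qmQ unfolding T_def by auto
  define B where "B = {n. n \<notin> T \<and> q n \<ge> Q/2}"
  have finB: "finite B"
  proof -
    have "finite {n. q n \<ge> Q/2}" using fin_ge[of "Q/2"] Qpos by simp
    thus ?thesis unfolding B_def by (rule finite_subset[rotated]) auto
  qed
  define Q' where "Q' = Max (insert (Q/2) (q ` B))"
  have Q'lt: "Q' < Q" unfolding Q'_def using finB Qpos Qge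
    by (subst Max_less_iff) (auto simp: B_def T_def less_le)
  have Q'ge2: "Q/2 \<le> Q'" unfolding Q'_def using finB by (intro Max_ge) auto
  have Q'pos: "Q' > 0" using Q'ge2 Qpos by simp
  have Q'ge: "q n \<le> Q'" if "n \<notin> T" for n
  proof (cases "q n \<ge> Q/2")
    case True hence "n \<in> B" using that unfolding B_def by simp
    thus ?thesis unfolding Q'_def using finB by simp
  next
    case False thus ?thesis using Q'ge2 by simp
  qed
  define r0 where "r0 = Min (r ` T)"
  define T0 where "T0 = {n \<in> T. r n = r0}"
  define T1 where "T1 = T - T0"
  have r0in: "r0 \<in> r ` T" unfolding r0_def using finT Tne by (intro Min_in) auto
  then obtain n0 where n0T: "n0 \<in> T" and rn0: "r n0 = r0" by auto
  have n0T0: "n0 \<in> T0" unfolding T0_def using n0T rn0 by simp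
  have finT0: "finite T0" "finite T1" unfolding T0_def T1_def using finT by auto
  have T01: "T0 \<subseteq> T" unfolding T0_def by auto
  have r0le: "r0 \<le> r n" if "n \<in> T" for n unfolding r0_def using finT that by simp
  have T1r: "r n > r0" if "n \<in> T1" for n using that r0le[of n] unfolding T1_def T0_def by force
  have r0pos: "r0 > 0" using rpos[of n0] rn0 by simp
  define b0 where "b0 = \<bar>Im (lam n0)\<bar>"
  have b0pos: "b0 > 0" using Tnr[OF n0T] unfolding b0_def by simp
  define \<nu> where "\<nu> = Complex r0 b0"
  have aT0: "a n = a n0" if "n \<in> T0" for n
  proof -
    have "q n = q n0" using that n0T unfolding T0_def T_def by simp
    moreover have "r n = r n0" using that rn0 unfolding T0_def by simp
    ultimately show ?thesis unfolding q_def by simp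
  qed
  have T0form: "lam n = \<nu> \<or> lam n = cnj \<nu>" if "n \<in> T0" for n
  proof -
    have "Im (lam n) ^ 2 = Im (lam n0) ^ 2" using cm2[of n] cm2[of n0] aT0[OF that] that rn0
      unfolding T0_def by simp
    hence "\<bar>Im (lam n)\<bar> = b0" unfolding b0_def power2_eq_iff by auto
    moreover have "Re (lam n) = r0" using that unfolding T0_def r_def by simp
    ultimately show ?thesis unfolding \<nu>_def by (cases "Im (lam n) \<ge> 0") (auto simp: complex_eq_iff)
  qed
  have normz: "norm (lam n ^ k * exp (- lam n * of_real (real k * s + \<tau>))) = q n ^ k * exp (- r n * \<tau>)" for n k \<tau>
  proof -
    have "norm (lam n ^ k * exp (- lam n * of_real (real k * s + \<tau>))) = a n ^ k * exp (- r n * (real k * s + \<tau>))"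
      by (simp add: norm_mult norm_power a_def r_def)
    also have "exp (- r n * (real k * s + \<tau>)) = exp (real k * (- r n * s) + (- r n * \<tau>))"
      by (simp add: algebra_simps)
    also have "\<dots> = exp (- r n * s) ^ k * exp (- r n * \<tau>)"
      by (simp only: exp_add exp_of_nat_mult)
    finally show ?thesis by (simp add: q_def power_mult_distrib)
  qed
  define C where "C = suminf q"
  have Cnn: "C \<ge> 0" unfolding C_def using qsum qpos by (intro suminf_nonneg) (auto intro: less_imp_le)
  have tail: "summable (\<lambda>n. if n \<in> T then 0 else lam n ^ k * exp (- lam n * of_real (real k * s + \<tau>)))
     \<and> Re (\<Sum>n. if n \<in> T then 0 else lam n ^ k * exp (- lam n * of_real (real k * s + \<tau>))) \<le> Q' ^ (k - 1) * C"
    if k1: "k \<ge> 1" and tau: "\<tau> > 0" for k \<tau>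
  proof -
    define h where "h n = (if n \<in> T then 0 else lam n ^ k * exp (- lam n * of_real (real k * s + \<tau>)))" for n
    have hb: "norm (h n) \<le> Q' ^ (k - 1) * q n" for n
    proof (cases "n \<in> T")
      case True thus ?thesis using qpos[of n] Q'pos by (simp add: h_def)
    next
      case False
      have "norm (h n) = q n ^ k * exp (- r n * \<tau>)" using False normz by (simp add: h_def)
      also have "\<dots> \<le> q n ^ k * 1" using rpos[of n] tau qpos[of n]
        by (intro mult_left_mono) (auto simp: mult_pos_pos)
      also have "q n ^ k * 1 = q n ^ (k - 1) * q n" using k1 by (cases k) auto
      also have "\<dots> \<le> Q' ^ (k - 1) * q n" using Q'ge[OF False] qpos[of n]
        by (intro mult_right_mono power_mono) auto
      finally show ?thesis .
    qed
    have s1: "summable (\<lambda>n. Q' ^ (k - 1) * q n)" using qsum by (rule summable_mult)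
    have s2: "summable (\<lambda>n. norm (h n))" by (rule summable_comparison_test[OF _ s1]) (use hb in auto)
    have "Re (suminf h) \<le> norm (suminf h)" by (rule complex_Re_le_cmod)
    also have "\<dots> \<le> (\<Sum>n. norm (h n))" by (rule summable_norm[OF s2])
    also have "\<dots> \<le> (\<Sum>n. Q' ^ (k - 1) * q n)" by (rule suminf_le[OF hb s2 s1])
    also have "\<dots> = Q' ^ (k - 1) * C" by (simp add: C_def suminf_mult[OF qsum])
    finally show ?thesis using summable_norm_cancel[OF s2] unfolding h_def by simp
  qed
  have lim1: "((\<lambda>\<tau>. \<Sum>n\<in>T1. exp (- (r n - r0) * \<tau>)) \<longlongrightarrow> 0) at_top"
  proof -
    have "((\<lambda>\<tau>. \<Sum>n\<in>T1. exp (- (r n - r0) * \<tau>)) \<longlongrightarrow> (\<Sum>n\<in>T1. 0)) at_top"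
    proof (rule tendsto_sum)
      fix n assume "n \<in> T1"
      hence c: "r n - r0 > 0" using T1r by simp
      show "((\<lambda>\<tau>. exp (- (r n - r0) * \<tau>)) \<longlongrightarrow> 0) at_top"
        by (intro filterlim_compose[OF exp_at_bot] filterlim_tendsto_neg_mult_at_bot[OF tendsto_const] filterlim_ident)
           (use c in auto)
    qed
    thus ?thesis by simp
  qed
  have "eventually (\<lambda>\<tau>. (\<Sum>n\<in>T1. exp (- (r n - r0) * \<tau>)) < 1/2) at_top"
    by (rule order_tendstoD(2)[OF lim1]) simp
  then obtain \<tau>0 where \<tau>0: "\<And>\<tau>. \<tau> \<ge> \<tau>0 \<Longrightarrow> (\<Sum>n\<in>T1. exp (- (r n - r0) * \<tau>)) < 1/2"
    by (auto simp: eventually_at_top_linorder)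
  define \<tau>1 where "\<tau>1 = max \<tau>0 1"
  define \<tau>2 where "\<tau>2 = \<tau>1 + 2*pi/b0"
  define E where "E = exp (- r0 * \<tau>2)"
  have Epos: "E > 0" unfolding E_def by simp
  have "(\<lambda>k. (Q'/Q) ^ k) \<longlonglongrightarrow> 0" by (rule LIMSEQ_power_zero) (use Q'pos Q'lt in simp)
  hence "eventually (\<lambda>k. (Q'/Q) ^ k < E * Q' / (2 * (C + 1))) sequentially"
    by (rule order_tendstoD(2)) (use Epos Q'pos Cnn in simp)
  then obtain N where N: "\<And>k. k \<ge> N \<Longrightarrow> (Q'/Q) ^ k < E * Q' / (2 * (C + 1))"
    by (auto simp: eventually_sequentially)
  define k where "k = Suc N"
  have k1: "k \<ge> 1" unfolding k_def by simp
  have kk: "(Q'/Q) ^ k * C < E * Q' / 2"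
  proof -
    have "(Q'/Q) ^ k * C \<le> (Q'/Q) ^ k * (C + 1)" using Q'pos Qpos by (intro mult_left_mono) auto
    also have "\<dots> < E * Q' / (2 * (C + 1)) * (C + 1)" using N[of k] Cnn unfolding k_def
      by (intro mult_strict_right_mono) auto
    also have "\<dots> = E * Q' / 2" using Cnn by (simp add: field_simps)
    finally show ?thesis .
  qed
  have kk2: "Q' ^ (k - 1) * C < Q ^ k * E / 2"
  proof -
    have "Q' ^ (k - 1) * C = (Q'/Q) ^ k * C * (Q ^ k / Q')"
      using Qpos Q'pos unfolding k_def by (simp add: field_simps power_divide)
    also have "\<dots> < E * Q' / 2 * (Q ^ k / Q')" using kk Qpos Q'pos by (intro mult_strict_right_mono) auto
    also have "\<dots> = Q ^ k * E / 2" using Q'pos by (simp add: field_simps)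
    finally show ?thesis .
  qed
  define W where "W = \<nu> * exp (- \<nu> * of_real s)"
  have normnu: "norm \<nu> = a n0" using T0form[OF n0T0] unfolding a_def by auto
  have normW: "norm W = Q"
  proof -
    have "norm W = a n0 * exp (- r0 * s)" unfolding W_def using normnu by (simp add: norm_mult \<nu>_def)
    also have "\<dots> = q n0" unfolding q_def using rn0 by simp
    also have "\<dots> = Q" using n0T unfolding T_def by simp
    finally show ?thesis .
  qed
  define \<alpha> where "\<alpha> = Arg (W ^ k)"
  have Wk: "W ^ k = of_real (Q ^ k) * cis \<alpha>"
  proof -
    have nz: "W ^ k \<noteq> 0" using normW Qpos by auto
    have "cis (Arg (W ^ k)) = W ^ k / of_real (Q ^ k)"
      using cis_Arg[OF nz] by (simp add: Complex.sgn_eq norm_power normW)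
    thus ?thesis using Qpos unfolding \<alpha>_def by simp
  qed
  obtain \<tau> where tau1: "\<tau>1 \<le> \<tau>" and tau2: "\<tau> \<le> \<tau>2" and cosm: "cos (\<alpha> - b0 * \<tau>) = -1"
    using phase_choice[OF b0pos, of \<tau>1 "\<alpha>"] unfolding \<tau>2_def by blast
  have taupos: "\<tau> > 0" using tau1 unfolding \<tau>1_def by simp
  have tau0: "\<tau> \<ge> \<tau>0" using tau1 unfolding \<tau>1_def by simp
  define t where "t = real k * s + \<tau>"
  have tpos: "t > 0" unfolding t_def using spos taupos by (intro add_nonneg_pos) auto
  have znu: "Re (\<nu> ^ k * exp (- \<nu> * of_real t)) = - (Q ^ k * exp (- r0 * \<tau>))"
  proof -
    have "exp (- \<nu> * of_real t) = exp (of_nat k * (- \<nu> * of_real s) + (- \<nu> * of_real \<tau>))"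
      unfolding t_def by (simp add: algebra_simps)
    also have "\<dots> = exp (- \<nu> * of_real s) ^ k * exp (- \<nu> * of_real \<tau>)"
      by (simp only: exp_add exp_of_nat_mult)
    finally have e1: "\<nu> ^ k * exp (- \<nu> * of_real t) = W ^ k * exp (- \<nu> * of_real \<tau>)"
      unfolding W_def by (simp add: power_mult_distrib)
    have "- \<nu> * of_real \<tau> = Complex (- r0 * \<tau>) (- b0 * \<tau>)" unfolding \<nu>_def by (simp add: complex_eq_iff)
    hence e2: "exp (- \<nu> * of_real \<tau>) = of_real (exp (- r0 * \<tau>)) * cis (- b0 * \<tau>)"
      by (simp add: exp_Complex cis.ctr)
    have "\<nu> ^ k * exp (- \<nu> * of_real t) = of_real (Q ^ k * exp (- r0 * \<tau>)) * (cis (\<alpha>) * cis (- b0 * \<tau>))"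
      unfolding e1 e2 Wk by (simp add: algebra_simps)
    also have "\<dots> = of_real (Q ^ k * exp (- r0 * \<tau>)) * cis (\<alpha> - b0 * \<tau>)"
      by (simp add: cis_mult)
    finally show ?thesis using cosm by simp
  qed
  define z where "z n = lam n ^ k * exp (- lam n * of_real t)" for n
  have zT0: "Re (z n) = - (Q ^ k * exp (- r0 * \<tau>))" if "n \<in> T0" for n
  proof (cases "lam n = \<nu>")
    case True thus ?thesis using znu by (simp add: z_def)
  next
    case False
    hence "lam n = cnj \<nu>" using T0form[OF that] by simp
    hence "z n = cnj (\<nu> ^ k * exp (- \<nu> * of_real t))" by (simp add: z_def exp_cnj)
    moreover have rc: "Re (cnj w) = Re w" for w by simp
    ultimately show ?thesis using znu by (simp only: rc)
  qed
  have zT1: "Re (z n) \<le> Q ^ k * exp (- r0 * \<tau>) * exp (- (r n - r0) * \<tau>)" if "n \<in> T1" for n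
  proof -
    have nT: "n \<in> T" using that unfolding T1_def by simp
    have "Re (z n) \<le> norm (z n)" by (rule complex_Re_le_cmod)
    also have "norm (z n) = q n ^ k * exp (- r n * \<tau>)" unfolding z_def t_def by (rule normz)
    also have "\<dots> = Q ^ k * exp (- r0 * \<tau>) * exp (- (r n - r0) * \<tau>)"
      using nT unfolding T_def by (simp add: mult.assoc exp_add[symmetric] algebra_simps)
    finally show ?thesis .
  qed
  define g where "g n = (if n \<in> T then z n else 0)" for n
  define h where "h n = (if n \<in> T then 0 else lam n ^ k * exp (- lam n * of_real (real k * s + \<tau>)))" for n
  have hs: "summable h" and hle: "Re (suminf h) \<le> Q' ^ (k - 1) * C"
    using tail[OF k1 taupos] unfolding h_def by auto
  have gs: "summable g" by (rule summable_finite[OF finT]) (simp add: g_def)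
  have gsum: "suminf g = sum z T" by (subst suminf_finite[OF finT]) (auto simp: g_def)
  have zgh: "z = (\<lambda>n. g n + h n)" by (auto simp: z_def g_def h_def t_def)
  have "Re (suminf z) = Re (sum z T) + Re (suminf h)"
    unfolding zgh suminf_add[OF gs hs, symmetric] gsum by simp
  also have "Re (sum z T) = (\<Sum>n\<in>T1. Re (z n)) + (\<Sum>n\<in>T0. Re (z n))"
    unfolding Re_sum T1_def by (rule sum.subset_diff[OF T01 finT])
  also have "(\<Sum>n\<in>T0. Re (z n)) = - (real (card T0) * (Q ^ k * exp (- r0 * \<tau>)))"
    using zT0 by simp
  also have "(\<Sum>n\<in>T1. Re (z n)) \<le> (\<Sum>n\<in>T1. Q ^ k * exp (- r0 * \<tau>) * exp (- (r n - r0) * \<tau>))"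
    by (rule sum_mono) (rule zT1)
  also have "\<dots> = Q ^ k * exp (- r0 * \<tau>) * (\<Sum>n\<in>T1. exp (- (r n - r0) * \<tau>))"
    by (simp add: sum_distrib_left)
  also have "\<dots> \<le> Q ^ k * exp (- r0 * \<tau>) * (1/2)"
    using \<tau>0[OF tau0] Qpos by (intro mult_left_mono) auto
  finally have A1: "Re (suminf z) \<le> Q ^ k * exp (- r0 * \<tau>) * (1/2) - real (card T0) * (Q ^ k * exp (- r0 * \<tau>)) + Re (suminf h)"
    by linarith
  have cardT0: "real (card T0) \<ge> 1" using n0T0 finT0 by (simp add: Suc_le_eq card_gt_0_iff) blast
  have EE: "E \<le> exp (- r0 * \<tau>)" unfolding E_def using tau2 r0pos by simp
  have QE: "Q ^ k * E \<le> Q ^ k * exp (- r0 * \<tau>)" using EE Qpos by (intro mult_left_mono) auto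
  have "real (card T0) * (Q ^ k * exp (- r0 * \<tau>)) \<ge> 1 * (Q ^ k * exp (- r0 * \<tau>))"
    using cardT0 Qpos by (intro mult_right_mono) auto
  hence "Re (suminf z) < 0" using A1 hle kk2 QE by linarith
  moreover have "Re (suminf z) \<ge> 0" using pos[OF tpos, of k] unfolding z_def by simp
  ultimately show False by simp
qed

lemma sign_deriv:
  fixes lam :: "nat \<Rightarrow> complex"
  assumes sec: "\<And>n. Re (lam n) \<ge> \<beta> * cmod (lam n) \<and> \<beta> * cmod (lam n) > 0"
    and summ: "summable (\<lambda>n. 1 / cmod (lam n))" and t: "0 < t"
  shows "summable (\<lambda>n. lam n ^ k * exp (- lam n * of_real t))"
    "(-1) ^ k * (deriv ^^ k) (\<lambda>t. Re (\<Sum>n. exp (- lam n * complex_of_real t))) t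
      = Re (\<Sum>n. lam n ^ k * exp (- lam n * of_real t))"
proof -
  have s0: "summable (\<lambda>n. (- lam n) ^ k * exp (- lam n * of_real t))" by (rule Fk_deriv(1)[OF sec summ t])
  have eq: "(\<lambda>n. (-1) ^ k * ((- lam n) ^ k * exp (- lam n * of_real t))) = (\<lambda>n. lam n ^ k * exp (- lam n * of_real t))"
  proof
    fix n
    have "((-1::complex) ^ k * (- lam n) ^ k) = lam n ^ k" by (simp add: power_mult_distrib[symmetric])
    thus "(-1) ^ k * ((- lam n) ^ k * exp (- lam n * of_real t)) = lam n ^ k * exp (- lam n * of_real t)"
      by (simp add: mult.assoc[symmetric])
  qed
  show "summable (\<lambda>n. lam n ^ k * exp (- lam n * of_real t))"
    using summable_mult[OF s0, of "(-1)^k"] unfolding eq .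
  have "(-1) ^ k * (deriv ^^ k) (\<lambda>t. Re (\<Sum>n. exp (- lam n * complex_of_real t))) t = (-1) ^ k * Re (Fk lam k (of_real t))"
    using deriv_iter[OF sec summ, of k] t by simp
  also have "\<dots> = Re ((-1) ^ k * Fk lam k (of_real t))" by simp
  also have "(-1) ^ k * Fk lam k (of_real t) = (\<Sum>n. (-1) ^ k * ((- lam n) ^ k * exp (- lam n * of_real t)))"
    unfolding Fk_def by (rule suminf_mult[OF s0, symmetric])
  also have "\<dots> = (\<Sum>n. lam n ^ k * exp (- lam n * of_real t))" unfolding eq ..
  finally show "(-1) ^ k * (deriv ^^ k) (\<lambda>t. Re (\<Sum>n. exp (- lam n * complex_of_real t))) t
      = Re (\<Sum>n. lam n ^ k * exp (- lam n * of_real t))" .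
qed

theorem lemma3:
  fixes f :: "complex \<Rightarrow> complex" and a :: "nat \<Rightarrow> real"
    and lam :: "nat \<Rightarrow> complex" and \<beta>\<^sub>0 :: real
  assumes entire: "f holomorphic_on UNIV"
    and series: "\<And>z. (\<lambda>n. complex_of_real (a n) * z ^ n) sums f z"
    and coeff_sign: "\<And>n. a 0 * a n > 0"
    and order: "limsup (\<lambda>n. ereal (real n * ln (real n) / (- ln \<bar>a n\<bar>))) < 1"
    and root: "\<exists>z. z \<noteq> 0 \<and> f z = 0"
    and prod: "\<And>z. (\<lambda>n. 1 + z / lam n) has_prod (f z / f 0)"
    and summ: "summable (\<lambda>n. 1 / cmod (lam n))"
    and beta: "0 < \<beta>\<^sub>0" "\<beta>\<^sub>0 < 1"
    and sector: "\<And>n. Re (lam n) \<ge> \<beta>\<^sub>0 * cmod (lam n) \<and> \<beta>\<^sub>0 * cmod (lam n) > 0"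
  shows "(\<forall>n. Im (lam n) = 0 \<and> Re (lam n) > 0) \<longleftrightarrow>
         ((\<forall>t>0. Im (\<Sum>n. exp (- lam n * complex_of_real t)) = 0) \<and>
          completely_monotonic (\<lambda>t. Re (\<Sum>n. exp (- lam n * complex_of_real t))))"
proof
  assume H: "\<forall>n. Im (lam n) = 0 \<and> Re (lam n) > 0"
  have lr: "lam n = complex_of_real (Re (lam n))" for n using H by (simp add: complex_eq_iff)
  have termr: "lam n ^ k * exp (- lam n * complex_of_real t) = complex_of_real (Re (lam n) ^ k * exp (- Re (lam n) * t))" for n k t
  proof -
    define r where "r = Re (lam n)"
    have e: "lam n = of_real r" using lr[of n] r_def by simp
    have "exp (- complex_of_real r * complex_of_real t) = complex_of_real (exp (- r * t))"
      by (simp add: exp_of_real[symmetric])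
    thus ?thesis unfolding r_def[symmetric] e by simp
  qed
  show "(\<forall>t>0. Im (\<Sum>n. exp (- lam n * complex_of_real t)) = 0) \<and>
          completely_monotonic (\<lambda>t. Re (\<Sum>n. exp (- lam n * complex_of_real t)))"
  proof (intro conjI allI impI)
    fix t :: real assume t: "t > 0"
    have s: "summable (\<lambda>n. exp (- lam n * complex_of_real t))"
      using sign_deriv(1)[OF sector summ t, of 0] by simp
    have "Im (\<Sum>n. exp (- lam n * complex_of_real t)) = (\<Sum>n. Im (exp (- lam n * complex_of_real t)))"
      by (rule Im_suminf[OF s])
    also have "\<dots> = 0" using termr[of _ 0 t] by simp
    finally show "Im (\<Sum>n. exp (- lam n * complex_of_real t)) = 0" .
  next
    show "completely_monotonic (\<lambda>t. Re (\<Sum>n. exp (- lam n * complex_of_real t)))"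
      unfolding completely_monotonic_def
    proof (intro conjI allI impI)
      fix k :: nat and x :: real assume x: "x > 0"
      show "((deriv ^^ k) (\<lambda>t. Re (\<Sum>n. exp (- lam n * complex_of_real t)))) differentiable (at x)"
        by (rule deriv_iter_diff[OF sector summ x])
      have s: "summable (\<lambda>n. lam n ^ k * exp (- lam n * of_real x))" by (rule sign_deriv(1)[OF sector summ x])
      have "(-1) ^ k * (deriv ^^ k) (\<lambda>t. Re (\<Sum>n. exp (- lam n * complex_of_real t))) x
          = Re (\<Sum>n. lam n ^ k * exp (- lam n * of_real x))" by (rule sign_deriv(2)[OF sector summ x])
      also have "\<dots> = (\<Sum>n. Re (lam n ^ k * exp (- lam n * of_real x)))" by (rule Re_suminf[OF s])
      also have "\<dots> \<ge> 0"
      proof (rule suminf_nonneg[OF summable_Re[OF s]])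
        fix n
        have "Re (lam n) > 0" using H by simp
        thus "0 \<le> Re (lam n ^ k * exp (- lam n * complex_of_real x))" unfolding termr by simp
      qed
      finally show "(-1) ^ k * (deriv ^^ k) (\<lambda>t. Re (\<Sum>n. exp (- lam n * complex_of_real t))) x \<ge> 0" .
    qed
  qed
next
  assume H: "(\<forall>t>0. Im (\<Sum>n. exp (- lam n * complex_of_real t)) = 0) \<and>
          completely_monotonic (\<lambda>t. Re (\<Sum>n. exp (- lam n * complex_of_real t)))"
  have pos: "Re (\<Sum>n. lam n ^ k * exp (- lam n * of_real t)) \<ge> 0" if t: "t > 0" for k t
  proof -
    have cm: "\<forall>k::nat. \<forall>x>0. (-1) ^ k * (deriv ^^ k) (\<lambda>t. Re (\<Sum>n. exp (- lam n * complex_of_real t))) x \<ge> 0"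
      using H unfolding completely_monotonic_def by blast
    hence A: "0 \<le> (-1) ^ k * (deriv ^^ k) (\<lambda>t. Re (\<Sum>n. exp (- lam n * complex_of_real t))) t"
      using t by blast
    show ?thesis using A unfolding sign_deriv(2)[OF sector summ t, of k] .
  qed
  show "\<forall>n. Im (lam n) = 0 \<and> Re (lam n) > 0"
  proof
    fix n
    show "Im (lam n) = 0 \<and> Re (lam n) > 0"
      using key[OF sector summ pos, of n] sector[of n] by auto
  qed
qed
end
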